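(* Let $\mathcal G=(\mathcal V,\mathcal E)$ be an undirected simple graph, $k\ge1$, $d\ge2$, and let $v,w\in\mathcal V$ satisfy $\mathrm{dist}(v,w)=k$. Suppose the radius-$k$ neighborhood of $v$ is a $d$-regular tree, i.e. the subgraph induced on the vertices at distance at most $k$ from $v$ is a tree and every such vertex has degree $d$ in $\mathcal G$. Let $I^A_{v,k}(w)$ (resp. $I^B_{v,k}(w)$) denote the influence of $w$ on the $k$-th sequence element at $v$ for the adjacency extraction $\mathbf S^{(k)}=\tilde{\mathbf A}_{\mathcal G}^k\mathbf X$ (resp. the non-backtracking extraction $\mathbf S^{(k)}=\mathbf B_{\mathcal G}^{(k)}\mathbf X$). Then $$\frac{I^A_{v,k}(w)}{I^B_{v,k}(w)}=\left(\frac{d-1}{d}\right)^{k-1}.$$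
   Context: $\mathbf X\in\mathbb R^{n\times d'}$ are node features with rows $\mathbf x_u$; $\mathbf s_v^{(k)}$ is row $v$ of $\mathbf S^{(k)}$. $\mathbf A_{\mathcal G}$ is the adjacency matrix, $\mathbf D_{\mathcal G}$ the diagonal degree matrix, $\tilde{\mathbf A}_{\mathcal G}=\mathbf D_{\mathcal G}^{-1/2}\mathbf A_{\mathcal G}\mathbf D_{\mathcal G}^{-1/2}$. Non-backtracking matrices: $\mathbf B_{\mathcal G}^{(0)}=\mathbf I$, $\mathbf B_{\mathcal G}^{(1)}=\mathbf A_{\mathcal G}$, $\mathbf B_{\mathcal G}^{(2)}=\mathbf A_{\mathcal G}^2-\mathbf D_{\mathcal G}$, $\mathbf B_{\mathcal G}^{(t+2)}=\mathbf A_{\mathcal G}\mathbf B_{\mathcal G}^{(t+1)}-(\mathbf D_{\mathcal G}-\mathbf I)\mathbf B_{\mathcal G}^{(t)}$. Influence: $I_{v,k}(w)=\mathbf e^T\big[\partial\mathbf s_v^{(k)}/\partial\mathbf x_w\big]\mathbf e\,\big/\,\sum_{u\in\mathcal V}\mathbf e^T\big[\partial\mathbf s_v^{(k)}/\partial\mathbf x_u\big]\mathbf e$, with $\mathbf e$ the all-ones vector. *)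

theory Defs
  imports "HOL-Analysis.Analysis" "HOL-Library.Extended_Nat"
begin

(* Matrices indexed by V are functions
   'a \<Rightarrow> 'a \<Rightarrow> real (only entries on V \<times> V matter). *)

definition walk :: "('a \<Rightarrow> 'a \<Rightarrow> bool) \<Rightarrow> 'a set \<Rightarrow> 'a list \<Rightarrow> bool" where
  "walk E S xs \<longleftrightarrow> xs \<noteq> [] \<and> set xs \<subseteq> S \<and>
     (\<forall>i. Suc i < length xs \<longrightarrow> E (xs ! i) (xs ! Suc i))"

definition gdist :: "'a set \<Rightarrow> ('a \<Rightarrow> 'a \<Rightarrow> bool) \<Rightarrow> 'a \<Rightarrow> 'a \<Rightarrow> enat" where
  "gdist V E a b = (INF xs \<in> {xs. walk E V xs \<and> hd xs = a \<and> last xs = b}.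
                      enat (length xs - 1))"

definition ball :: "'a set \<Rightarrow> ('a \<Rightarrow> 'a \<Rightarrow> bool) \<Rightarrow> 'a \<Rightarrow> nat \<Rightarrow> 'a set" where
  "ball V E v k = {u \<in> V. gdist V E v u \<le> enat k}"

definition is_tree :: "('a \<Rightarrow> 'a \<Rightarrow> bool) \<Rightarrow> 'a set \<Rightarrow> bool" where
  "is_tree E S \<longleftrightarrow> S \<noteq> {} \<and>
     (\<forall>a\<in>S. \<forall>b\<in>S. \<exists>xs. walk E S xs \<and> hd xs = a \<and> last xs = b) \<and>
     \<not> (\<exists>cs. 3 \<le> length cs \<and> distinct cs \<and> walk E S cs \<and> E (last cs) (hd cs))"

definition deg :: "'a set \<Rightarrow> ('a \<Rightarrow> 'a \<Rightarrow> bool) \<Rightarrow> 'a \<Rightarrow> nat" where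
  "deg V E u = card {x \<in> V. E u x}"

definition idm :: "'a \<Rightarrow> 'a \<Rightarrow> real" where
  "idm i j = (if i = j then 1 else 0)"

definition mmul :: "'a set \<Rightarrow> ('a \<Rightarrow> 'a \<Rightarrow> real) \<Rightarrow> ('a \<Rightarrow> 'a \<Rightarrow> real) \<Rightarrow> 'a \<Rightarrow> 'a \<Rightarrow> real" where
  "mmul V M N = (\<lambda>i j. \<Sum>l\<in>V. M i l * N l j)"

fun mpow :: "'a set \<Rightarrow> ('a \<Rightarrow> 'a \<Rightarrow> real) \<Rightarrow> nat \<Rightarrow> 'a \<Rightarrow> 'a \<Rightarrow> real" where
  "mpow V M 0 = idm"
| "mpow V M (Suc n) = mmul V M (mpow V M n)"

definition adj :: "('a \<Rightarrow> 'a \<Rightarrow> bool) \<Rightarrow> 'a \<Rightarrow> 'a \<Rightarrow> real" where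
  "adj E i j = (if E i j then 1 else 0)"

definition degm :: "'a set \<Rightarrow> ('a \<Rightarrow> 'a \<Rightarrow> bool) \<Rightarrow> 'a \<Rightarrow> 'a \<Rightarrow> real" where
  "degm V E i j = (if i = j then real (deg V E i) else 0)"

(* D^{-1/2} A D^{-1/2}; convention 1/sqrt 0 = 0 for isolated vertices *)
definition normadj :: "'a set \<Rightarrow> ('a \<Rightarrow> 'a \<Rightarrow> bool) \<Rightarrow> 'a \<Rightarrow> 'a \<Rightarrow> real" where
  "normadj V E i j = adj E i j / (sqrt (real (deg V E i)) * sqrt (real (deg V E j)))"

fun nbm :: "'a set \<Rightarrow> ('a \<Rightarrow> 'a \<Rightarrow> bool) \<Rightarrow> nat \<Rightarrow> 'a \<Rightarrow> 'a \<Rightarrow> real" where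
  "nbm V E 0 = idm"
| "nbm V E (Suc 0) = adj E"
| "nbm V E (Suc (Suc 0)) = (\<lambda>i j. mmul V (adj E) (adj E) i j - degm V E i j)"
| "nbm V E (Suc (Suc (Suc t))) =
     (\<lambda>i j. mmul V (adj E) (nbm V E (Suc (Suc t))) i j
           - mmul V (\<lambda>a b. degm V E a b - idm a b) (nbm V E (Suc t)) i j)"

(* row v of S = M X, with X the node-feature matrix (rows x_u \<in> R^d') *)
definition srow :: "'a set \<Rightarrow> ('a \<Rightarrow> 'a \<Rightarrow> real) \<Rightarrow> ('a \<Rightarrow> real^'f) \<Rightarrow> 'a \<Rightarrow> real^'f" where
  "srow V M X v = (\<Sum>u\<in>V. M v u *\<^sub>R X u)"

definition jac :: "'a set \<Rightarrow> ('a \<Rightarrow> 'a \<Rightarrow> real) \<Rightarrow> ('a \<Rightarrow> real^'f) \<Rightarrow> 'a \<Rightarrow> 'a \<Rightarrow> real^'f^'f" where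
  "jac V M X v u = matrix (THE f'. ((\<lambda>y. srow V M (X(u := y)) v) has_derivative f') (at (X u)))"

definition esum :: "real^'f^'f \<Rightarrow> real" where
  "esum J = (\<Sum>i\<in>UNIV. \<Sum>j\<in>UNIV. J $ i $ j)"

definition influence :: "'a set \<Rightarrow> ('a \<Rightarrow> 'a \<Rightarrow> real) \<Rightarrow> ('a \<Rightarrow> real^'f) \<Rightarrow> 'a \<Rightarrow> 'a \<Rightarrow> real" where
  "influence V M X v w = esum (jac V M X v w) / (\<Sum>u\<in>V. esum (jac V M X v u))"

end

theory Submission
  imports Defs
begin


lemma esum_scale: "esum (matrix (\<lambda>y::real^'f. c *\<^sub>R y)) = c * real CARD('f)"
proof -
  have "esum (matrix (\<lambda>y::real^'f. c *\<^sub>R y)) = (\<Sum>i\<in>(UNIV::'f set). \<Sum>j\<in>UNIV. if i = j then c else 0)"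
    unfolding esum_def matrix_def by (intro sum.cong refl) (simp add: axis_def)
  also have "\<dots> = c * real CARD('f)" by simp
  finally show ?thesis .
qed

lemma jac_eq:
  assumes "finite V" "u \<in> V"
  shows "jac V M X v u = matrix (\<lambda>y::real^'f. M v u *\<^sub>R y)"
proof -
  have eq: "(\<lambda>y. srow V M (X(u := y)) v) = (\<lambda>y. M v u *\<^sub>R y + (\<Sum>u'\<in>V-{u}. M v u' *\<^sub>R X u'))"
  proof
    fix y
    have "srow V M (X(u := y)) v = M v u *\<^sub>R (X(u:=y)) u + (\<Sum>u'\<in>V-{u}. M v u' *\<^sub>R (X(u:=y)) u')"
      unfolding srow_def using assms by (simp add: sum.remove)
    also have "(\<Sum>u'\<in>V-{u}. M v u' *\<^sub>R (X(u:=y)) u') = (\<Sum>u'\<in>V-{u}. M v u' *\<^sub>R X u')"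
      by (rule sum.cong) auto
    finally show "srow V M (X(u := y)) v = M v u *\<^sub>R y + (\<Sum>u'\<in>V-{u}. M v u' *\<^sub>R X u')" by (simp add: fun_upd_def)
  qed
  have d: "((\<lambda>y. srow V M (X(u := y)) v) has_derivative (\<lambda>y. M v u *\<^sub>R y)) (at (X u))"
    unfolding eq by (auto intro!: derivative_eq_intros)
  have "(THE f'. ((\<lambda>y. srow V M (X(u := y)) v) has_derivative f') (at (X u))) = (\<lambda>y. M v u *\<^sub>R y)"
    using d has_derivative_unique by blast
  thus ?thesis unfolding jac_def by simp
qed

lemma influence_eq:
  assumes "finite V" "w \<in> V"
  shows "influence V M (X::'a \<Rightarrow> real^'f) v w = M v w / (\<Sum>u\<in>V. M v u)"
proof -
  have c: "real CARD('f) \<noteq> 0" by simp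
  have "influence V M X v w = (M v w * real CARD('f)) / (\<Sum>u\<in>V. M v u * real CARD('f))"
    unfolding influence_def using assms by (simp add: jac_eq esum_scale)
  also have "\<dots> = M v w / (\<Sum>u\<in>V. M v u)"
    using c by (simp add: sum_distrib_right[symmetric])
  finally show ?thesis .
qed



definition msub :: "('a \<Rightarrow> 'a \<Rightarrow> real) \<Rightarrow> ('a \<Rightarrow> 'a \<Rightarrow> real) \<Rightarrow> 'a \<Rightarrow> 'a \<Rightarrow> real" where
  "msub M N = (\<lambda>i j. M i j - N i j)"

lemma mmul_assoc: "finite V \<Longrightarrow> mmul V (mmul V M N) P = mmul V M (mmul V N P)"
  unfolding mmul_def
  by (auto simp: fun_eq_iff sum_distrib_left sum_distrib_right mult.assoc intro: sum.swap)

lemma mmul_sub_l: "mmul V (msub M N) P = msub (mmul V M P) (mmul V N P)"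
  unfolding mmul_def msub_def by (simp add: fun_eq_iff left_diff_distrib sum_subtractf)

lemma mmul_sub_r: "mmul V M (msub N P) = msub (mmul V M N) (mmul V M P)"
  unfolding mmul_def msub_def by (simp add: fun_eq_iff right_diff_distrib sum_subtractf)

lemma mmul_idm_l: "finite V \<Longrightarrow> mmul V idm M = (\<lambda>i j. if i \<in> V then M i j else 0)"
proof -
  assume f: "finite V"
  have "(\<Sum>l\<in>V. idm i l * M l j) = (\<Sum>l\<in>V. if i = l then M i j else 0)" for i j
    by (rule sum.cong) (auto simp: idm_def)
  thus ?thesis unfolding mmul_def using f by (simp add: fun_eq_iff)
qed

lemma mmul_idm_r: "finite V \<Longrightarrow> mmul V M idm = (\<lambda>i j. if j \<in> V then M i j else 0)"
proof -
  assume f: "finite V"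
  have "(\<Sum>l\<in>V. M i l * idm l j) = (\<Sum>l\<in>V. if l = j then M i j else 0)" for i j
    by (rule sum.cong) (auto simp: idm_def)
  thus ?thesis unfolding mmul_def using f by (simp add: fun_eq_iff)
qed

lemma mmul_diag_comm:
  assumes "\<And>i j. i \<noteq> j \<Longrightarrow> M i j = 0" "\<And>i j. i \<noteq> j \<Longrightarrow> N i j = 0"
  shows "mmul V M N = mmul V N M"
proof -
  have "mmul V M N i j = mmul V N M i j" for i j
  proof (cases "i = j")
    case True
    then show ?thesis unfolding mmul_def by (intro sum.cong refl) (metis assms mult.commute mult_zero_left)
  next
    case False
    have "mmul V M N i j = 0" unfolding mmul_def
      by (rule sum.neutral) (metis False assms mult_eq_0_iff)
    moreover have "mmul V N M i j = 0" unfolding mmul_def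
      by (rule sum.neutral) (metis False assms mult_eq_0_iff)
    ultimately show ?thesis by simp
  qed
  thus ?thesis by blast
qed

lemma nbm_3: "nbm V E (Suc (Suc (Suc t))) =
   msub (mmul V (adj E) (nbm V E (Suc (Suc t)))) (mmul V (msub (degm V E) idm) (nbm V E (Suc t)))"
  by (simp add: msub_def)

lemma nbm_2: "nbm V E (Suc (Suc 0)) = msub (mmul V (adj E) (adj E)) (degm V E)"
  by (simp add: msub_def)

lemma alg_step:
  assumes fin: "finite V"
    and hP: "B2 = msub (mmul V B1 A) (mmul V B0 Q)"
    and hL: "B2 = msub (mmul V A B1) (mmul V Q B0)"
  shows "msub (mmul V A (msub (mmul V B2 A) (mmul V B1 Q))) (mmul V Q B2)
       = msub (mmul V (msub (mmul V A B2) (mmul V Q B1)) A) (mmul V B2 Q)"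
proof -
  note mm = mmul_assoc[OF fin] mmul_sub_l mmul_sub_r
  have e1: "mmul V Q B2 = msub (mmul V Q (mmul V B1 A)) (mmul V Q (mmul V B0 Q))"
    using hP by (simp add: mm)
  have e2: "mmul V B2 Q = msub (mmul V A (mmul V B1 Q)) (mmul V Q (mmul V B0 Q))"
    using hL by (simp add: mm)
  show ?thesis
    apply (simp only: mm e1 e2)
    by (simp add: msub_def fun_eq_iff)
qed

lemma nbm_right:
  assumes fin: "finite V" and EV: "\<forall>a b. E a b \<longrightarrow> a \<in> V \<and> b \<in> V"
  shows "nbm V E (Suc (Suc (Suc t))) =
     msub (mmul V (nbm V E (Suc (Suc t))) (adj E)) (mmul V (nbm V E (Suc t)) (msub (degm V E) idm))"
  using fin
proof (induction t rule: nat_less_induct)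
  case (1 t)
  define A where "A = adj E"
  define D where "D = degm V E"
  define Q where "Q = msub D idm"
  define B where "B = nbm V E"
  note mm = mmul_assoc[OF fin] mmul_sub_l mmul_sub_r
  have A0: "A i j = 0" if "i \<notin> V \<or> j \<notin> V" for i j
    using EV that unfolding A_def adj_def by auto
  have AI: "mmul V A idm = A" "mmul V idm A = A"
    by (auto simp: mmul_idm_l[OF fin] mmul_idm_r[OF fin] fun_eq_iff A0)
  have DQ: "mmul V D Q = mmul V Q D"
    by (rule mmul_diag_comm) (auto simp: D_def Q_def degm_def msub_def idm_def)
  show ?case
  proof (cases t)
    case 0
    have "B 3 = msub (mmul V A (msub (mmul V A A) D)) (mmul V Q A)"
      by (simp add: B_def A_def D_def Q_def numeral_3_eq_3 msub_def)
    also have "\<dots> = msub (mmul V (msub (mmul V A A) D) A) (mmul V A Q)"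
      unfolding Q_def apply (simp only: mm)
      by (simp add: AI fun_eq_iff msub_def)
    also have "\<dots> = msub (mmul V (B 2) A) (mmul V (B 1) Q)"
      by (simp add: B_def A_def D_def Q_def numeral_2_eq_2 msub_def)
    finally show ?thesis using 0
      by (simp add: B_def A_def D_def Q_def numeral_3_eq_3 numeral_2_eq_2)
  next
    case (Suc s)
    have IH: "B (s+3) = msub (mmul V (B (s+2)) A) (mmul V (B (s+1)) Q)"
      using "1.IH" Suc fin by (simp add: B_def A_def D_def Q_def eval_nat_numeral)
    have L3: "B (s+3) = msub (mmul V A (B (s+2))) (mmul V Q (B (s+1)))"
      by (simp add: B_def A_def D_def Q_def eval_nat_numeral msub_def)
    have key: "msub (mmul V A (B (s+3))) (mmul V Q (B (s+2))) =
               msub (mmul V (B (s+3)) A) (mmul V (B (s+2)) Q)"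
    proof (cases s)
      case 0
      have b2: "B 2 = msub (mmul V A A) D" by (simp add: B_def A_def D_def numeral_2_eq_2 msub_def)
      have b1: "B 1 = A" by (simp add: B_def A_def)
      have "msub (mmul V A (B (s+3))) (mmul V Q (B (s+2))) =
            msub (mmul V A (msub (mmul V (B 2) A) (mmul V (B 1) Q))) (mmul V Q (B 2))"
        using IH 0 by (simp add: numeral_2_eq_2)
      also have "\<dots> = msub (mmul V (msub (mmul V A (B 2)) (mmul V Q (B 1))) A) (mmul V (B 2) Q)"
        unfolding b2 b1 apply (simp only: mm DQ)
        by (simp add: fun_eq_iff msub_def)
      also have "\<dots> = msub (mmul V (B (s+3)) A) (mmul V (B (s+2)) Q)"
        using L3 0 by (simp add: numeral_2_eq_2)
      finally show ?thesis .
    next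
      case (Suc r)
      have IH2: "B (r+3) = msub (mmul V (B (r+2)) A) (mmul V (B (r+1)) Q)"
        using "1.IH" Suc \<open>t = Suc s\<close> fin by (simp add: B_def A_def D_def Q_def eval_nat_numeral)
      have L: "B (r+3) = msub (mmul V A (B (r+2))) (mmul V Q (B (r+1)))"
        by (simp add: B_def A_def D_def Q_def eval_nat_numeral msub_def)
      have sr: "s + 3 = r + 4" "s + 2 = r + 3" "s + 1 = r + 2" using Suc by auto
      have "msub (mmul V A (B (s+3))) (mmul V Q (B (s+2))) =
            msub (mmul V A (msub (mmul V (B (r+3)) A) (mmul V (B (r+2)) Q))) (mmul V Q (B (r+3)))"
        using IH sr by (simp add: eval_nat_numeral)
      also have "\<dots> = msub (mmul V (msub (mmul V A (B (r+3))) (mmul V Q (B (r+2)))) A) (mmul V (B (r+3)) Q)"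
        by (rule alg_step[OF fin IH2 L])
      also have "\<dots> = msub (mmul V (B (s+3)) A) (mmul V (B (s+2)) Q)"
        using L3 sr by (simp add: eval_nat_numeral)
      finally show ?thesis .
    qed
    have "B (s+4) = msub (mmul V A (B (s+3))) (mmul V Q (B (s+2)))"
      by (simp add: B_def A_def D_def Q_def eval_nat_numeral msub_def)
    with key show ?thesis using Suc by (simp add: B_def A_def D_def Q_def eval_nat_numeral)
  qed
qed



definition chain :: "('a \<Rightarrow> 'a \<Rightarrow> bool) \<Rightarrow> 'a set \<Rightarrow> 'a list \<Rightarrow> bool" where
  "chain E S xs \<longleftrightarrow> set xs \<subseteq> S \<and> (\<forall>i. Suc i < length xs \<longrightarrow> E (xs ! i) (xs ! Suc i))"

lemma walk_chain: "walk E S xs \<longleftrightarrow> xs \<noteq> [] \<and> chain E S xs"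
  unfolding walk_def chain_def by auto

lemma chain_Nil[simp]: "chain E S []" by (simp add: chain_def)

lemma chain_Cons: "chain E S (x # xs) \<longleftrightarrow> x \<in> S \<and> chain E S xs \<and> (xs \<noteq> [] \<longrightarrow> E x (hd xs))"
proof -
  have "(\<forall>i. Suc i < length (x # xs) \<longrightarrow> E ((x # xs) ! i) ((x # xs) ! Suc i)) \<longleftrightarrow>
        (\<forall>i. Suc i < length xs \<longrightarrow> E (xs ! i) (xs ! Suc i)) \<and> (xs \<noteq> [] \<longrightarrow> E x (hd xs))"
    (is "?L \<longleftrightarrow> ?R")
  proof
    assume L: ?L
    have "E (xs ! i) (xs ! Suc i)" if "Suc i < length xs" for i
      using L[rule_format, of "Suc i"] that by simp
    moreover have "E x (hd xs)" if "xs \<noteq> []"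
      using L[rule_format, of 0] that by (simp add: hd_conv_nth)
    ultimately show ?R by blast
  next
    assume R: ?R
    show ?L
    proof (intro allI impI)
      fix i assume i: "Suc i < length (x # xs)"
      show "E ((x # xs) ! i) ((x # xs) ! Suc i)"
      proof (cases i)
        case 0 then show ?thesis using R i by (cases xs) auto
      next
        case (Suc j) then show ?thesis using R i by auto
      qed
    qed
  qed
  thus ?thesis unfolding chain_def by auto
qed

lemma chain_append: "chain E S (xs @ ys) \<longleftrightarrow> chain E S xs \<and> chain E S ys \<and>
   (xs \<noteq> [] \<and> ys \<noteq> [] \<longrightarrow> E (last xs) (hd ys))"
  by (induction xs) (auto simp: chain_Cons)

lemma chain_map_upt:
  assumes "\<And>i. i \<le> n \<Longrightarrow> f i \<in> S" "\<And>i. i < n \<Longrightarrow> E (f i) (f (Suc i))"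
  shows "chain E S (map f [0..<Suc n])"
proof -
  have "map f [0..<Suc n] ! i = f i" if "i \<le> n" for i
    using that by (simp only: length_upt nth_map_upt) simp
  thus ?thesis unfolding chain_def using assms
    by (auto simp del: upt_Suc simp: nth_map_upt)
qed

lemma gd_le:
  assumes "walk E V xs" "hd xs = a" "last xs = b"
  shows "gdist V E a b \<le> enat (length xs - 1)"
  unfolding gdist_def by (rule INF_lower) (use assms in simp)

lemma gd_ex:
  assumes "gdist V E a b = enat n"
  shows "\<exists>xs. walk E V xs \<and> hd xs = a \<and> last xs = b \<and> length xs - 1 = n"
proof -
  let ?S = "{xs. walk E V xs \<and> hd xs = a \<and> last xs = b}"
  let ?T = "(\<lambda>xs. enat (length xs - 1)) ` ?S"
  have ne: "?T \<noteq> {}"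
  proof
    assume "?T = {}"
    hence "gdist V E a b = \<infinity>" unfolding gdist_def by (simp add: Inf_enat_def)
    with assms show False by simp
  qed
  have "gdist V E a b = Inf ?T" unfolding gdist_def by simp
  also have "\<dots> = (LEAST x. x \<in> ?T)" using ne by (simp only: Inf_enat_def if_False)
  finally have "gdist V E a b = (LEAST x. x \<in> ?T)" .
  moreover obtain t where "t \<in> ?T" using ne by blast
  hence "(LEAST x. x \<in> ?T) \<in> ?T" by (rule LeastI)
  ultimately have "gdist V E a b \<in> ?T" by simp
  with assms show ?thesis by auto
qed

lemma gd_0: "a \<in> V \<Longrightarrow> gdist V E a a = 0"
  using gd_le[of E V "[a]" a a] by (simp add: walk_def zero_enat_def[symmetric])

lemma gd_0_eq: "gdist V E a b = 0 \<Longrightarrow> a = b"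
proof -
  assume "gdist V E a b = 0"
  then obtain xs where xs: "walk E V xs" "hd xs = a" "last xs = b" "length xs - 1 = 0"
    using gd_ex[of V E a b 0] by (auto simp: zero_enat_def)
  then obtain z where "xs = [z]" by (cases xs) (auto simp: walk_def)
  with xs show ?thesis by simp
qed

lemma gd_edge:
  assumes EV: "\<forall>a b. E a b \<longrightarrow> a \<in> V \<and> b \<in> V" and e: "E x y"
  shows "gdist V E a y \<le> gdist V E a x + 1"
proof (cases "gdist V E a x")
  case (enat n)
  then obtain xs where xs: "walk E V xs" "hd xs = a" "last xs = x" "length xs - 1 = n"
    using gd_ex[OF enat] by blast
  have yV: "y \<in> V" using EV e by blast
  have "walk E V (xs @ [y])" using xs(1,3) e yV
    by (simp add: walk_chain chain_append chain_Cons)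
  moreover have "hd (xs @ [y]) = a" "last (xs @ [y]) = y" using xs by (auto simp: walk_def)
  ultimately have "gdist V E a y \<le> enat (length (xs @ [y]) - 1)" by (rule gd_le)
  also have "\<dots> = enat n + 1"
  proof -
    have "xs \<noteq> []" using xs(1) by (simp add: walk_def)
    hence "length (xs @ [y]) - 1 = Suc n" using xs(4) by (cases xs) auto
    thus ?thesis by (simp add: one_enat_def)
  qed
  finally show ?thesis using enat by simp
qed simp

lemma gd_parent:
  assumes EV: "\<forall>a b. E a b \<longrightarrow> a \<in> V \<and> b \<in> V" and g: "gdist V E a b = enat (Suc n)"
  shows "\<exists>p. p \<in> V \<and> E p b \<and> gdist V E a p = enat n"
proof -
  obtain xs where xs: "walk E V xs" "hd xs = a" "last xs = b" "length xs - 1 = Suc n"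
    using gd_ex[OF g] by blast
  define ys where "ys = butlast xs"
  have xsys: "xs = ys @ [b]" using xs by (auto simp: ys_def walk_def)
  have yne: "ys \<noteq> []" using xs xsys by auto
  have cy: "chain E V ys" and eb: "E (last ys) b" using xs yne unfolding xsys
    by (auto simp: walk_chain chain_append)
  have wy: "walk E V ys" using cy yne by (simp add: walk_chain)
  have "gdist V E a (last ys) \<le> enat (length ys - 1)"
    by (rule gd_le[OF wy]) (use xs xsys yne in auto)
  hence le: "gdist V E a (last ys) \<le> enat n" using xs xsys by simp
  have "gdist V E a b \<le> gdist V E a (last ys) + 1" by (rule gd_edge[OF EV eb])
  hence "enat (Suc n) \<le> gdist V E a (last ys) + 1" using g by simp
  hence "enat n \<le> gdist V E a (last ys)"
    by (cases "gdist V E a (last ys)") (auto simp: one_enat_def)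
  with le have "gdist V E a (last ys) = enat n" by simp
  moreover have "last ys \<in> V" using cy yne by (auto simp: chain_def)
  ultimately show ?thesis using eb by blast
qed



lemma gd_fin_V: "gdist V E a b = enat n \<Longrightarrow> b \<in> V"
  using gd_ex[of V E a b n] by (auto simp: walk_def)

locale tb =
  fixes V :: "'a set" and E :: "'a \<Rightarrow> 'a \<Rightarrow> bool" and v :: 'a and k d :: nat
  assumes fin: "finite V"
    and sym: "\<forall>a b. E a b \<longrightarrow> E b a"
    and irr: "\<forall>a. \<not> E a a"
    and EV: "\<forall>a b. E a b \<longrightarrow> a \<in> V \<and> b \<in> V"
    and k1: "k \<ge> 1" and d2: "d \<ge> 2"
    and vV: "v \<in> V"
    and tree: "is_tree E (ball V E v k)"
    and reg: "\<forall>u\<in>ball V E v k. deg V E u = d"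
begin

abbreviation dv where "dv u \<equiv> gdist V E v u"
abbreviation Bl where "Bl \<equiv> ball V E v k"

lemma symE: "E a b \<Longrightarrow> E b a" using sym by blast
lemma EV1: "E a b \<Longrightarrow> a \<in> V" using EV by blast
lemma EV2: "E a b \<Longrightarrow> b \<in> V" using EV by blast

lemma inBl: "dv u = enat r \<Longrightarrow> r \<le> k \<Longrightarrow> u \<in> Bl"
  unfolding ball_def using gd_fin_V[of V E v u r] by auto

definition par :: "'a \<Rightarrow> 'a" where
  "par u = (SOME p. p \<in> V \<and> E p u \<and> dv p = enat (the_enat (dv u) - 1))"

lemma par: assumes "dv u = enat (Suc n)" shows "par u \<in> V \<and> E (par u) u \<and> dv (par u) = enat n"
proof -
  have "\<exists>p. p \<in> V \<and> E p u \<and> dv p = enat (the_enat (dv u) - 1)"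
    using gd_parent[OF EV assms] assms by simp
  hence "par u \<in> V \<and> E (par u) u \<and> dv (par u) = enat (the_enat (dv u) - 1)"
    unfolding par_def by (rule someI_ex)
  thus ?thesis using assms by simp
qed

definition anc :: "'a \<Rightarrow> nat \<Rightarrow> 'a" where "anc u i = (par ^^ i) u"

lemma anc_Suc: "anc u (Suc i) = par (anc u i)" by (simp add: anc_def)
lemma anc_0: "anc u 0 = u" by (simp add: anc_def)

lemma anc: assumes "dv u = enat r" "i \<le> r" shows "dv (anc u i) = enat (r - i)"
  using assms(2)
proof (induction i)
  case 0 then show ?case using assms by (simp add: anc_0)
next
  case (Suc i)
  have "dv (anc u i) = enat (Suc (r - Suc i))" using Suc by simp
  then show ?case using par by (simp add: anc_Suc)
qed

lemma anc_V: "dv u = enat r \<Longrightarrow> i \<le> r \<Longrightarrow> anc u i \<in> V"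
  using anc gd_fin_V by metis

lemma anc_edge: assumes "dv u = enat r" "i < r" shows "E (anc u (Suc i)) (anc u i)"
proof -
  have "dv (anc u i) = enat (Suc (r - Suc i))" using anc[OF assms(1), of i] assms(2) by simp
  thus ?thesis using par by (simp add: anc_Suc)
qed

lemma lvl0: "dv u = 0 \<Longrightarrow> u = v" using gd_0_eq by metis

lemma anc_top: "dv u = enat r \<Longrightarrow> anc u r = v"
  using anc[of u r r] lvl0 by (simp add: zero_enat_def)

lemma anc_Bl: "dv u = enat r \<Longrightarrow> r \<le> k \<Longrightarrow> i \<le> r \<Longrightarrow> anc u i \<in> Bl"
  using anc inBl by (metis diff_le_self order_trans)

lemma no_cycle:
  assumes x: "dv x = enat r" and y: "dv y = enat r" and rk: "r \<le> k" and xy: "x \<noteq> y"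
    and e1: "E x (hd (ms @ [y]))" and e2: "ms \<noteq> [] \<longrightarrow> E (last ms) y"
    and cm: "chain E Bl ms" and dm: "distinct ms"
    and lm: "\<forall>z\<in>set ms. \<exists>n. dv z = enat n \<and> r < n"
  shows False
proof -
  define m where "m = (LEAST i. anc x i = anc y i)"
  have ex: "anc x r = anc y r" using anc_top x y by simp
  have mr: "m \<le> r" unfolding m_def using ex by (rule Least_le)
  have eqm: "anc x m = anc y m" unfolding m_def using ex by (rule LeastI)
  have neq: "anc x i \<noteq> anc y i" if "i < m" for i
    using not_less_Least[OF that[unfolded m_def]] by blast
  have m1: "m \<ge> 1" using eqm xy by (cases m) (auto simp: anc_0)
  define L where "L = map (\<lambda>i. anc x (m - i)) [0..<Suc m]"
  define U where "U = map (anc y) [0..<Suc (m - 1)]"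
  define cs where "cs = L @ ms @ U"
  have cL: "chain E Bl L" unfolding L_def
  proof (rule chain_map_upt)
    fix i assume "i \<le> m" thus "anc x (m - i) \<in> Bl" using anc_Bl[OF x rk] mr by simp
  next
    fix i assume i: "i < m"
    have "E (anc x (Suc (m - Suc i))) (anc x (m - Suc i))"
      using anc_edge[OF x] i mr by simp
    moreover have "Suc (m - Suc i) = m - i" using i by simp
    ultimately show "E (anc x (m - i)) (anc x (m - Suc i))" by simp
  qed
  have cU: "chain E Bl U" unfolding U_def
  proof (rule chain_map_upt)
    fix i assume "i \<le> m - 1" thus "anc y i \<in> Bl" using anc_Bl[OF y rk] mr by simp
  next
    fix i assume i: "i < m - 1"
    show "E (anc y i) (anc y (Suc i))" using anc_edge[OF y, of i] i mr symE by simp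
  qed
  have hdU: "hd U = y" unfolding U_def by (simp add: anc_0 del: upt_Suc add: upt_conv_Cons)
  have lastL: "last L = x" unfolding L_def by (simp add: anc_0)
  have hdL: "hd L = anc x m" unfolding L_def by (simp del: upt_Suc add: upt_conv_Cons)
  have lastU: "last U = anc y (m - 1)" unfolding U_def by simp
  have Lne: "L \<noteq> []" and Une: "U \<noteq> []" unfolding L_def U_def by simp_all
  have cMU: "chain E Bl (ms @ U)"
    using cm cU e2 hdU Une by (simp add: chain_append)
  have "hd (ms @ U) = hd (ms @ [y])" using hdU Une by (cases ms) auto
  hence ccs: "chain E Bl cs" unfolding cs_def using cL cMU e1 lastL Lne Une
    by (simp add: chain_append)
  have wcs: "walk E Bl cs" using ccs Lne by (simp add: walk_chain cs_def)
  have len: "3 \<le> length cs" unfolding cs_def L_def U_def using m1 by simp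
  have close: "E (last cs) (hd cs)"
  proof -
    have "last cs = anc y (m - 1)" unfolding cs_def using lastU Une by simp
    moreover have "hd cs = anc y (Suc (m - 1))" unfolding cs_def using hdL Lne eqm m1 by simp
    moreover have "E (anc y (Suc (m - 1))) (anc y (m - 1))" using anc_edge[OF y, of "m - 1"] m1 mr by linarith
    ultimately show ?thesis using symE by simp
  qed
  have lvL: "\<And>z. z \<in> set L \<Longrightarrow> \<exists>i\<le>m. z = anc x i" unfolding L_def
    by (auto simp del: upt_Suc intro: diff_le_self)
  have lvU: "\<And>z. z \<in> set U \<Longrightarrow> \<exists>i<m. z = anc y i" unfolding U_def using m1 by auto
  have injx: "anc x i = anc x j \<Longrightarrow> i \<le> r \<Longrightarrow> j \<le> r \<Longrightarrow> i = j" for i j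
    using anc[OF x, of i] anc[OF x, of j] by auto
  have injy: "anc y i = anc y j \<Longrightarrow> i \<le> r \<Longrightarrow> j \<le> r \<Longrightarrow> i = j" for i j
    using anc[OF y, of i] anc[OF y, of j] by auto
  have dL: "distinct L" unfolding L_def
  proof (rule distinct_map[THEN iffD2], intro conjI)
    show "inj_on (\<lambda>i. anc x (m - i)) (set [0..<Suc m])"
      by (rule inj_onI) (use injx mr in fastforce)
  qed simp
  have dU: "distinct U" unfolding U_def
  proof (rule distinct_map[THEN iffD2], intro conjI)
    show "inj_on (anc y) (set [0..<Suc (m - 1)])"
      by (rule inj_onI) (use injy mr m1 in fastforce)
  qed simp
  have lowL: "\<exists>n\<le>r. dv z = enat n" if "z \<in> set L" for z
    using lvL[OF that] anc[OF x] mr by fastforce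
  have lowU: "\<exists>n\<le>r. dv z = enat n" if "z \<in> set U" for z
    using lvU[OF that] anc[OF y] mr by fastforce
  have d1: "set ms \<inter> set U = {}"
  proof (rule ccontr)
    assume "set ms \<inter> set U \<noteq> {}"
    then obtain z where "z \<in> set ms" "z \<in> set U" by blast
    thus False using lm lowU by fastforce
  qed
  have d2': "set L \<inter> set ms = {}"
  proof (rule ccontr)
    assume "set L \<inter> set ms \<noteq> {}"
    then obtain z where "z \<in> set ms" "z \<in> set L" by blast
    thus False using lm lowL by fastforce
  qed
  have d3: "set L \<inter> set U = {}"
  proof (rule ccontr)
    assume "set L \<inter> set U \<noteq> {}"
    then obtain z where zL: "z \<in> set L" and zU: "z \<in> set U" by blast
    obtain i where i: "i \<le> m" "z = anc x i" using lvL[OF zL] by blast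
    obtain j where j: "j < m" "z = anc y j" using lvU[OF zU] by blast
    have "dv z = enat (r - i)" using anc[OF x, of i] i mr by simp
    moreover have "dv z = enat (r - j)" using anc[OF y, of j] j mr by simp
    ultimately have "i = j" using i j mr by simp
    thus False using neq[OF j(1)] i j by simp
  qed
  have "distinct cs" unfolding cs_def using dL dU dm d1 d2' d3 by auto
  thus False using tree wcs len close unfolding is_tree_def by blast
qed

lemma same_level:
  assumes "dv x = enat r" "dv y = enat r" "r \<le> k" "E x y" shows False
proof -
  have "x \<noteq> y" using irr assms(4) by blast
  show False by (rule no_cycle[OF assms(1-3) \<open>x \<noteq> y\<close>, of "[]"]) (use assms in auto)
qed

lemma uniq_par:
  assumes u: "dv u = enat (Suc r)" and rk: "Suc r \<le> k"
    and p: "E p u" "dv p = enat r" and q: "E q u" "dv q = enat r"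
  shows "p = q"
proof (rule ccontr)
  assume pq: "p \<noteq> q"
  show False
  proof (rule no_cycle[OF p(2) q(2) _ pq, of "[u]"])
    show "r \<le> k" using rk by simp
    show "chain E Bl [u]" using inBl[OF u rk] by (simp add: chain_def)
  qed (use p q u symE in auto)
qed

end


lemma mpow_right:
  assumes fin: "finite V" and M0: "\<And>i j. i \<notin> V \<or> j \<notin> V \<Longrightarrow> M i j = 0"
  shows "mpow V M (Suc n) = mmul V (mpow V M n) M"
proof (induction n)
  case 0
  have "mmul V M idm = M" "mmul V idm M = M"
    by (auto simp: mmul_idm_l[OF fin] mmul_idm_r[OF fin] fun_eq_iff M0)
  thus ?case by simp
next
  case (Suc n)
  have "mpow V M (Suc (Suc n)) = mmul V M (mmul V (mpow V M n) M)" using Suc by simp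
  also have "\<dots> = mmul V (mpow V M (Suc n)) M" by (simp add: mmul_assoc[OF fin])
  finally show ?case .
qed

context tb
begin

lemma nbr: assumes "E x y" "dv x = enat r" shows "\<exists>n. dv y = enat n \<and> n \<le> Suc r \<and> r \<le> Suc n"
proof -
  have a: "dv y \<le> dv x + 1" by (rule gd_edge[OF EV assms(1)])
  have b: "dv x \<le> dv y + 1" by (rule gd_edge[OF EV symE[OF assms(1)]])
  from a assms(2) obtain n where n: "dv y = enat n" "n \<le> Suc r"
    by (cases "dv y") (auto simp: one_enat_def)
  from b n assms(2) have "r \<le> Suc n" by (simp add: one_enat_def)
  with n show ?thesis by blast
qed

lemma degBl: "u \<in> Bl \<Longrightarrow> card {x \<in> V. E u x} = d"
  using reg unfolding deg_def by auto

lemma children: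
  assumes u: "dv u = enat r" and rk: "r \<le> k"
  shows "card {x \<in> V. E u x \<and> dv x = enat (Suc r)} = (if r = 0 then d else d - 1)"
proof -
  let ?N = "{x \<in> V. E u x}"
  let ?C = "{x \<in> V. E u x \<and> dv x = enat (Suc r)}"
  have cN: "card ?N = d" using degBl inBl[OF u rk] by blast
  have lv: "x \<in> ?C \<or> (r \<ge> 1 \<and> x = par u)" if "x \<in> ?N" for x
  proof -
    from that have e: "E u x" "x \<in> V" by auto
    obtain n where n: "dv x = enat n" "n \<le> Suc r" "r \<le> Suc n" using nbr[OF e(1) u] by blast
    have "n \<noteq> r" using same_level[OF u _ rk e(1)] n by auto
    moreover have "n = r - 1 \<and> r \<ge> 1 \<Longrightarrow> x = par u"
    proof -
      assume h: "n = r - 1 \<and> r \<ge> 1"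
      then obtain r' where r': "r = Suc r'" by (cases r) auto
      have p: "E (par u) u" "dv (par u) = enat r'" using par[of u r'] u r' by auto
      show "x = par u"
        by (rule uniq_par[of u r' x "par u"]) (use u r' rk p symE[OF e(1)] n h in auto)
    qed
    ultimately show ?thesis using n e by (cases "n = Suc r") auto
  qed
  show ?thesis
  proof (cases "r = 0")
    case True
    hence "?N = ?C" using lv by auto
    thus ?thesis using cN True by simp
  next
    case False
    then obtain r' where r': "r = Suc r'" by (cases r) auto
    have p: "par u \<in> V" "E (par u) u" "dv (par u) = enat r'" using par[of u r'] u r' by auto
    have "?N = insert (par u) ?C" using lv False p symE by auto
    moreover have "par u \<notin> ?C" using p r' by auto
    moreover have "finite ?C" using fin by simp
    ultimately have "card ?N = Suc (card ?C)" by simp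
    thus ?thesis using cN False by simp
  qed
qed

lemma parent_set:
  assumes u: "dv u = enat (Suc r)" and rk: "Suc r \<le> k"
  shows "{l \<in> V. dv l = enat r \<and> E l u} = {par u}"
  using par[OF u] uniq_par[OF u rk] by auto

lemma same_set:
  assumes u: "dv u = enat r" and rk: "r \<le> k"
  shows "{l \<in> V. dv l = enat r \<and> E l u} = {}"
  using same_level[OF _ u rk] by auto

end


context tb
begin

lemma cnt_val:
  assumes sk: "Suc (Suc s) \<le> k" and uV: "u \<in> V"
  shows "real (card {l \<in> V. dv l = enat (Suc s) \<and> E l u})
         - (if dv u = enat s then (if s = 0 then real d else real d - 1) else 0)
         = (if dv u = enat (Suc (Suc s)) then 1 else 0)"
proof -
  let ?C = "{l \<in> V. dv l = enat (Suc s) \<and> E l u}"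
  consider (a) "dv u = enat (Suc (Suc s))" | (b) "dv u = enat (Suc s)" | (c) "dv u = enat s"
    | (e) "dv u \<noteq> enat (Suc (Suc s))" "dv u \<noteq> enat (Suc s)" "dv u \<noteq> enat s" by blast
  then show ?thesis
  proof cases
    case a
    have "?C = {par u}" by (rule parent_set[OF a sk])
    thus ?thesis using a by simp
  next
    case b
    have C0: "?C = {}" by (rule same_set[OF b]) (use sk in simp)
    have "card ?C = 0" unfolding C0 by simp
    thus ?thesis using b by simp
  next
    case c
    have "?C = {x \<in> V. E u x \<and> dv x = enat (Suc s)}" using symE by blast
    hence "card ?C = (if s = 0 then d else d - 1)" using children[OF c] sk by simp
    thus ?thesis using c d2 by (auto simp: of_nat_diff)
  next
    case e
    have "?C = {}"
    proof (rule ccontr)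
      assume "?C \<noteq> {}"
      then obtain l where l: "dv l = enat (Suc s)" "E l u" by blast
      obtain n where "dv u = enat n" "n \<le> Suc (Suc s)" "Suc s \<le> Suc n" using nbr[OF l(2) l(1)] by blast
      thus False using e by (metis le_SucE not_less_eq_eq order_antisym_conv)
    qed
    hence "card ?C = 0" by (simp only: card.empty)
    thus ?thesis using e by simp
  qed
qed

lemma sum_ind: "finite S \<Longrightarrow> (\<Sum>l\<in>S. (if P l then 1 else 0) * f l) = (\<Sum>l\<in>{l\<in>S. P l}. (f l :: real))"
proof -
  assume f: "finite S"
  have "(\<Sum>l\<in>S. (if P l then 1 else 0) * f l) = (\<Sum>l\<in>S. if P l then f l else 0)"
    by (rule sum.cong) auto
  thus ?thesis using f by (simp add: sum.inter_filter)
qed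

lemma Brow: "t \<le> k \<Longrightarrow> u \<in> V \<Longrightarrow> nbm V E t v u = (if dv u = enat t then 1 else 0)"
proof (induction t arbitrary: u rule: nat_less_induct)
  case (1 t)
  show ?case
  proof (cases t)
    case 0
    have "dv u = enat 0 \<longleftrightarrow> u = v" using lvl0 gd_0[OF vV] by (auto simp: zero_enat_def)
    thus ?thesis using 0 by (auto simp: idm_def)
  next
    case (Suc t1)
    show ?thesis
    proof (cases t1)
      case 0
      have "E v u \<longleftrightarrow> dv u = enat 1"
      proof
        assume e: "E v u"
        obtain n where n: "dv u = enat n" "n \<le> 1" using nbr[OF e, of 0] gd_0[OF vV] by (auto simp: zero_enat_def)
        have "u \<noteq> v" using irr e by blast
        have "n \<noteq> 0"
        proof
          assume "n = 0" hence "dv u = 0" using n(1) by (simp add: zero_enat_def)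
          thus False using lvl0 \<open>u \<noteq> v\<close> by blast
        qed
        thus "dv u = enat 1" using n by simp
      next
        assume h: "dv u = enat 1"
        have "E (par u) u" "dv (par u) = enat 0" using par[of u 0] h by (auto simp: one_enat_def)
        moreover have "par u = v" using calculation(2) lvl0 by (simp add: zero_enat_def)
        ultimately show "E v u" by simp
      qed
      thus ?thesis using Suc 0 by (simp add: adj_def)
    next
      case (Suc s)
      have tk: "Suc (Suc s) \<le> k" using "1.prems" \<open>t = Suc t1\<close> Suc by simp
      have r1: "nbm V E (Suc s) v l = (if dv l = enat (Suc s) then 1 else 0)" if "l \<in> V" for l
        using "1.IH" tk that \<open>t = Suc t1\<close> Suc by simp
      have r0: "nbm V E s v l = (if dv l = enat s then 1 else 0)" if "l \<in> V" for l
        using "1.IH" tk that \<open>t = Suc t1\<close> Suc by simp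
      have S1: "(\<Sum>l\<in>V. nbm V E (Suc s) v l * adj E l u) = real (card {l \<in> V. dv l = enat (Suc s) \<and> E l u})"
      proof -
        have "(\<Sum>l\<in>V. nbm V E (Suc s) v l * adj E l u) = (\<Sum>l\<in>V. (if dv l = enat (Suc s) then 1 else 0) * adj E l u)"
          by (rule sum.cong) (simp_all add: r1)
        also have "\<dots> = (\<Sum>l\<in>{l\<in>V. dv l = enat (Suc s)}. adj E l u)" by (rule sum_ind[OF fin])
        also have "\<dots> = (\<Sum>l\<in>{l\<in>V. dv l = enat (Suc s)}. (if E l u then 1 else 0))" by (simp add: adj_def)
        also have "\<dots> = (\<Sum>l\<in>{l\<in>{l\<in>V. dv l = enat (Suc s)}. E l u}. 1)"
          by (rule sum.inter_filter[symmetric]) (simp add: fin)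
        also have "{l\<in>{l\<in>V. dv l = enat (Suc s)}. E l u} = {l \<in> V. dv l = enat (Suc s) \<and> E l u}" by auto
        finally show ?thesis by simp
      qed
      have val: "nbm V E (Suc (Suc s)) v u = real (card {l \<in> V. dv l = enat (Suc s) \<and> E l u})
         - (if dv u = enat s then (if s = 0 then real d else real d - 1) else 0)"
      proof (cases s)
        case 0
        have "nbm V E (Suc (Suc s)) v u = (\<Sum>l\<in>V. adj E v l * adj E l u) - degm V E v u"
          using 0 by (simp add: mmul_def)
        also have "(\<Sum>l\<in>V. adj E v l * adj E l u) = (\<Sum>l\<in>V. nbm V E (Suc s) v l * adj E l u)"
          using 0 by simp
        also have "degm V E v u = (if dv u = enat s then real d else 0)"
        proof -
          have "dv u = enat 0 \<longleftrightarrow> u = v" using lvl0 gd_0[OF vV] by (auto simp: zero_enat_def)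
          moreover have "deg V E v = d" using reg inBl[of v 0] gd_0[OF vV] by (simp add: zero_enat_def)
          ultimately show ?thesis using 0 by (auto simp: degm_def)
        qed
        finally show ?thesis using S1 0 by simp
      next
        case (Suc s')
        have "nbm V E (Suc (Suc s)) v u = (\<Sum>l\<in>V. nbm V E (Suc s) v l * adj E l u)
              - (\<Sum>l\<in>V. nbm V E s v l * msub (degm V E) idm l u)"
          using nbm_right[OF fin EV, of s'] Suc by (simp add: mmul_def msub_def)
        also have "(\<Sum>l\<in>V. nbm V E s v l * msub (degm V E) idm l u) =
                   (\<Sum>l\<in>V. if l = u then nbm V E s v u * (real (deg V E u) - 1) else 0)"
          by (rule sum.cong) (auto simp: msub_def degm_def idm_def)
        also have "\<dots> = nbm V E s v u * (real (deg V E u) - 1)" using fin "1.prems" by simp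
        also have "\<dots> = (if dv u = enat s then real d - 1 else 0)"
        proof -
          have "dv u = enat s \<Longrightarrow> deg V E u = d" using reg inBl[of u s] tk by auto
          thus ?thesis using r0[OF "1.prems"(2)] by simp
        qed
        finally show ?thesis using S1 Suc by simp
      qed
      show ?thesis using val cnt_val[OF tk "1.prems"(2)] \<open>t = Suc t1\<close> Suc by simp
    qed
  qed
qed

end


context tb
begin

definition Sph where "Sph t = {u \<in> V. dv u = enat t}"

lemma sph_Suc:
  assumes tk: "Suc t \<le> k"
  shows "card (Sph (Suc t)) = card (Sph t) * (if t = 0 then d else d - 1)"
proof -
  define Ch where "Ch u = {x \<in> V. E u x \<and> dv x = enat (Suc t)}" for u
  have eq: "Sph (Suc t) = (\<Union>u\<in>Sph t. Ch u)"
  proof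
    show "Sph (Suc t) \<subseteq> (\<Union>u\<in>Sph t. Ch u)"
    proof
      fix x assume "x \<in> Sph (Suc t)"
      hence x: "x \<in> V" "dv x = enat (Suc t)" by (auto simp: Sph_def)
      have p: "par x \<in> V" "E (par x) x" "dv (par x) = enat t" using par[OF x(2)] by auto
      thus "x \<in> (\<Union>u\<in>Sph t. Ch u)" using x by (auto simp: Sph_def Ch_def)
    qed
  qed (auto simp: Sph_def Ch_def)
  have disj: "Ch a \<inter> Ch b = {}" if "a \<in> Sph t" "b \<in> Sph t" "a \<noteq> b" for a b
  proof (rule ccontr)
    assume "Ch a \<inter> Ch b \<noteq> {}"
    then obtain x where x: "E a x" "E b x" "dv x = enat (Suc t)" by (auto simp: Ch_def)
    have "a = b" by (rule uniq_par[OF x(3) tk x(1) _ x(2)]) (use that in \<open>auto simp: Sph_def\<close>)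
    with that show False by simp
  qed
  have "card (Sph (Suc t)) = (\<Sum>u\<in>Sph t. card (Ch u))"
    unfolding eq by (rule card_UN_disjoint) (use fin disj in \<open>auto simp: Sph_def Ch_def\<close>)
  also have "\<dots> = (\<Sum>u\<in>Sph t. (if t = 0 then d else d - 1))"
    by (rule sum.cong) (use children tk in \<open>auto simp: Sph_def Ch_def\<close>)
  finally show ?thesis by simp
qed

lemma sph0: "Sph 0 = {v}"
  using lvl0 gd_0[OF vV] vV by (auto simp: Sph_def zero_enat_def)

lemma sph: "1 \<le> t \<Longrightarrow> t \<le> k \<Longrightarrow> card (Sph t) = d * (d - 1) ^ (t - 1)"
proof (induction t)
  case 0 then show ?case by simp
next
  case (Suc t)
  show ?case
  proof (cases t)
    case 0 then show ?thesis using sph_Suc[of 0] Suc.prems sph0 by simp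
  next
    case (Suc t')
    then show ?thesis using sph_Suc[of t] Suc.prems Suc.IH by simp
  qed
qed

lemma Bsum: "(\<Sum>u\<in>V. nbm V E k v u) = real (card (Sph k))"
proof -
  have "(\<Sum>u\<in>V. nbm V E k v u) = (\<Sum>u\<in>V. if dv u = enat k then 1 else 0)"
    by (rule sum.cong) (simp_all add: Brow)
  also have "\<dots> = (\<Sum>u\<in>Sph k. 1)" unfolding Sph_def
    by (rule sum.inter_filter[symmetric]) (simp add: fin)
  finally show ?thesis by simp
qed

lemma Nval: "l \<in> Bl \<Longrightarrow> u \<in> Bl \<Longrightarrow> E l u \<Longrightarrow> normadj V E l u = 1 / real d"
  using reg by (simp add: normadj_def adj_def)

lemma N0: "i \<notin> V \<or> j \<notin> V \<Longrightarrow> normadj V E i j = 0"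
  using EV by (auto simp: normadj_def adj_def)

lemma Nnz: "normadj V E l u \<noteq> 0 \<Longrightarrow> E l u"
  by (auto simp: normadj_def adj_def split: if_splits)

lemma Nrow1: assumes l: "dv l = enat n" and nk: "n < k" shows "(\<Sum>u\<in>V. normadj V E l u) = 1"
proof -
  have lB: "l \<in> Bl" using inBl l nk by simp
  have "(\<Sum>u\<in>V. normadj V E l u) = (\<Sum>u\<in>V. if E l u then 1 / real d else 0)"
  proof (rule sum.cong)
    fix u assume "u \<in> V"
    show "normadj V E l u = (if E l u then 1 / real d else 0)"
    proof (cases "E l u")
      case True
      obtain n' where "dv u = enat n'" "n' \<le> Suc n" using nbr[OF True l] by blast
      hence "u \<in> Bl" using inBl nk by simp
      thus ?thesis using Nval lB True by simp
    qed (simp add: normadj_def adj_def)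
  qed simp
  also have "\<dots> = (\<Sum>u\<in>{u\<in>V. E l u}. 1 / real d)"
    by (rule sum.inter_filter[symmetric]) (simp add: fin)
  also have "\<dots> = 1" using degBl[OF lB] d2 by simp
  finally show ?thesis .
qed

lemma Arow:
  "t \<le> k \<Longrightarrow> (\<forall>u\<in>V. mpow V (normadj V E) t v u \<noteq> 0 \<longrightarrow> (\<exists>n\<le>t. dv u = enat n))
     \<and> (\<Sum>u\<in>V. mpow V (normadj V E) t v u) = 1
     \<and> (\<forall>u. dv u = enat t \<longrightarrow> mpow V (normadj V E) t v u = 1 / real d ^ t)"
proof (induction t)
  case 0
  have a: "\<forall>u\<in>V. mpow V (normadj V E) 0 v u \<noteq> 0 \<longrightarrow> (\<exists>n\<le>0. dv u = enat n)"
    using gd_0[OF vV] by (auto simp: idm_def zero_enat_def)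
  have b: "(\<Sum>u\<in>V. mpow V (normadj V E) 0 v u) = 1"
    using fin vV by (simp add: idm_def)
  have c: "\<forall>u. dv u = enat 0 \<longrightarrow> mpow V (normadj V E) 0 v u = 1 / real d ^ 0"
    using lvl0 by (auto simp: idm_def zero_enat_def)
  show ?case using a b c by blast
next
  case (Suc t)
  let ?N = "normadj V E"
  let ?P = "mpow V ?N t v"
  have IH: "\<forall>u\<in>V. ?P u \<noteq> 0 \<longrightarrow> (\<exists>n\<le>t. dv u = enat n)" "(\<Sum>u\<in>V. ?P u) = 1"
     "\<forall>u. dv u = enat t \<longrightarrow> ?P u = 1 / real d ^ t" using Suc by auto
  have tk: "Suc t \<le> k" using Suc by simp
  have rec: "mpow V ?N (Suc t) v u = (\<Sum>l\<in>V. ?P l * ?N l u)" for u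
    using mpow_right[OF fin N0] by (simp add: mmul_def)
  have a: "\<forall>u\<in>V. mpow V ?N (Suc t) v u \<noteq> 0 \<longrightarrow> (\<exists>n\<le>Suc t. dv u = enat n)"
  proof (intro ballI impI)
    fix u assume "u \<in> V" "mpow V ?N (Suc t) v u \<noteq> 0"
    then obtain l where l: "l \<in> V" "?P l * ?N l u \<noteq> 0" unfolding rec
      by (meson sum.neutral)
    obtain n where n: "n \<le> t" "dv l = enat n" using IH(1) l by auto
    obtain n' where "dv u = enat n'" "n' \<le> Suc n" using nbr[OF Nnz n(2)] l by auto
    thus "\<exists>n\<le>Suc t. dv u = enat n" using n by auto
  qed
  have b: "(\<Sum>u\<in>V. mpow V ?N (Suc t) v u) = 1"
  proof -
    have "(\<Sum>u\<in>V. mpow V ?N (Suc t) v u) = (\<Sum>u\<in>V. \<Sum>l\<in>V. ?P l * ?N l u)" by (rule sum.cong[OF refl]) (rule rec)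
    also have "\<dots> = (\<Sum>l\<in>V. ?P l * (\<Sum>u\<in>V. ?N l u))"
      by (subst sum.swap) (simp add: sum_distrib_left)
    also have "\<dots> = (\<Sum>l\<in>V. ?P l)"
    proof (rule sum.cong)
      fix l assume l: "l \<in> V"
      show "?P l * (\<Sum>u\<in>V. ?N l u) = ?P l"
      proof (cases "?P l = 0")
        case False
        then obtain n where "n \<le> t" "dv l = enat n" using IH(1) l by auto
        thus ?thesis using Nrow1 tk by simp
      qed simp
    qed simp
    finally show ?thesis using IH(2) by simp
  qed
  have c: "\<forall>u. dv u = enat (Suc t) \<longrightarrow> mpow V ?N (Suc t) v u = 1 / real d ^ Suc t"
  proof (intro allI impI)
    fix u assume u: "dv u = enat (Suc t)"
    have uV: "u \<in> V" using gd_fin_V u by metis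
    have p: "par u \<in> V" "E (par u) u" "dv (par u) = enat t" using par[OF u] by auto
    have "(\<Sum>l\<in>V. ?P l * ?N l u) = (\<Sum>l\<in>V. if l = par u then ?P l * ?N l u else 0)"
    proof (rule sum.cong)
      fix l assume l: "l \<in> V"
      show "?P l * ?N l u = (if l = par u then ?P l * ?N l u else 0)"
      proof (cases "?P l * ?N l u = 0")
        case False
        hence e: "E l u" and "?P l \<noteq> 0" using Nnz by auto
        then obtain n where n: "n \<le> t" "dv l = enat n" using IH(1) l by auto
        obtain n' where "dv u = enat n'" "n' \<le> Suc n" using nbr[OF e n(2)] by auto
        hence "n = t" using u n by simp
        hence "l = par u" using uniq_par[OF u tk e _ p(2) p(3)] n by simp
        thus ?thesis by simp
      qed simp
    qed simp
    also have "\<dots> = ?P (par u) * ?N (par u) u" using fin p(1) by simp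
    also have "\<dots> = 1 / real d ^ t * (1 / real d)"
      using IH(3) p Nval inBl[OF p(3)] inBl[OF u tk] tk by simp
    finally show "mpow V ?N (Suc t) v u = 1 / real d ^ Suc t" unfolding rec by simp
  qed
  show ?case using a b c by blast
qed

end

theorem lemmaG2:
  fixes V :: "'a set" and E :: "'a \<Rightarrow> 'a \<Rightarrow> bool" and k d :: nat
    and v w :: 'a and X :: "'a \<Rightarrow> real^'f"
  assumes "finite V"
    and "\<forall>a b. E a b \<longrightarrow> E b a"
    and "\<forall>a. \<not> E a a"
    and "\<forall>a b. E a b \<longrightarrow> a \<in> V \<and> b \<in> V"
    and "k \<ge> 1" and "d \<ge> 2"
    and "v \<in> V" and "w \<in> V"
    and "gdist V E v w = enat k"
    and "is_tree E (ball V E v k)"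
    and "\<forall>u\<in>ball V E v k. deg V E u = d"
  shows "influence V (mpow V (normadj V E) k) X v w / influence V (nbm V E k) X v w
         = ((real d - 1) / real d) ^ (k - 1)"
proof -
  interpret tb V E v k d
    by (rule tb.intro) (use assms in auto)
  have A: "influence V (mpow V (normadj V E) k) X v w = 1 / real d ^ k"
  proof -
    have "influence V (mpow V (normadj V E) k) X v w =
          mpow V (normadj V E) k v w / (\<Sum>u\<in>V. mpow V (normadj V E) k v u)"
      by (rule influence_eq[OF assms(1) assms(8)])
    thus ?thesis using Arow[of k] assms(9) by simp
  qed
  have B: "influence V (nbm V E k) X v w = 1 / (real d * (real d - 1) ^ (k - 1))"
  proof -
    have "influence V (nbm V E k) X v w = nbm V E k v w / (\<Sum>u\<in>V. nbm V E k v u)"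
      by (rule influence_eq[OF assms(1) assms(8)])
    also have "(\<Sum>u\<in>V. nbm V E k v u) = real (card (Sph k))" by (rule Bsum)
    also have "nbm V E k v w = 1" using Brow[of k w] assms(8,9) by simp
    also have "real (card (Sph k)) = real d * (real d - 1) ^ (k - 1)"
      using sph[of k] assms(5,6) by (simp add: of_nat_diff)
    finally show ?thesis .
  qed
  obtain k' where k': "k = Suc k'" using assms(5) by (cases k) auto
  have dpos: "real d > 0" "real d - 1 > 0" using assms(6) by auto
  have "(1 / real d ^ k) / (1 / (real d * (real d - 1) ^ (k - 1))) = ((real d - 1) / real d) ^ (k - 1)"
    unfolding k' using dpos by (simp add: power_divide field_simps)
  thus ?thesis by (simp only: A B)
qed

end
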